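(* Let $s\in\{1,\ldots,d\}$, $M\in\mathbb{R}^{\mathcal{I}}$, $P\subset\mathcal{I}$, $\alpha\in\mathbb{R}$. Let $G^-$ and $G$ be TT representations with the same ranks, where $G_1,\ldots,G_{s-1}$ are left orthogonal and $G_{s+1},\ldots,G_d$ are right orthogonal. Define $Z\in\mathbb{R}^{\mathcal{I}}$ by $Z_i:=M_i$ for $i\in P$ and $Z_i:=A^{G^-}_i$ for $i\in\mathcal{I}\setminus P$, and $Z^\alpha:=\alpha Z+(1-\alpha)A^{G^-}$. Then the minimizer of $\|Z^\alpha-A^{\tilde G}\|_F$ over $\tilde G_s$, where $\tilde G_\nu:=G_\nu$ for $\nu\neq s$ (the update block with overrelaxation parameter $\alpha$), is the block $G_s^{new}$ given for all $j\in\mathcal{I}_s$ by \[ G_s^{new}(j) = (G^{<s})^T (G^-)^{<s}\, G^{-}_s(j)\, (G^-)^{>s} (G^{>s})^T + \sum_{i \in P,\, i_s = j} \alpha\, (M_i - A^{G^{-}}_i)\, (G_1(i_1)\cdots G_{s-1}(i_{s-1}))^T\, (G_{s+1}(i_{s+1})\cdots G_d(i_d))^T. \]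
   Context: Let $\mathcal{I}_\mu=\{1,\ldots,n_\mu\}$, $\mathcal{I}=\mathcal{I}_1\times\cdots\times\mathcal{I}_d$. A TT representation with ranks $r_0=1,r_1,\ldots,r_{d-1},r_d=1$ consists of maps $G_\mu:\mathcal{I}_\mu\to\mathbb{R}^{r_{\mu-1}\times r_\mu}$; it represents $A^G_{i_1,\ldots,i_d}=G_1(i_1)\cdots G_d(i_d)$. $\|\cdot\|_F$ is the Euclidean norm of all entries. $G_\mu$ is left orthogonal if $\sum_{i}G_\mu(i)^TG_\mu(i)=I$, right orthogonal if $\sum_i G_\mu(i)G_\mu(i)^T=I$. For a representation $H$, $H^{<s}$ is the matrix with rows indexed by $(i_1,\ldots,i_{s-1})$, row $(i_1,\ldots,i_{s-1})$ being $H_1(i_1)\cdots H_{s-1}(i_{s-1})\in\mathbb{R}^{1\times r_{s-1}}$ (the $1\times1$ identity if $s=1$), and $H^{>s}$ is the matrix with columns indexed by $(i_{s+1},\ldots,i_d)$, column $(i_{s+1},\ldots,i_d)$ being $H_{s+1}(i_{s+1})\cdots H_d(i_d)\in\mathbb{R}^{r_s\times1}$ (the $1\times1$ identity if $s=d$). *)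

theory Defs
  imports "Jordan_Normal_Form.Matrix"
begin

text \<open>A multi-index is a function i :: nat => nat, where i mu (1 <= mu <= d) is the mu-th index,
  ranging over {1..n mu}.\<close>

definition tt_index_set :: "nat \<Rightarrow> (nat \<Rightarrow> nat) \<Rightarrow> (nat \<Rightarrow> nat) set" where
  "tt_index_set d n = PiE {1..d} (\<lambda>mu. {1..n mu})"

definition is_tt_rep :: "nat \<Rightarrow> (nat \<Rightarrow> nat) \<Rightarrow> (nat \<Rightarrow> nat) \<Rightarrow> (nat \<Rightarrow> nat \<Rightarrow> real mat) \<Rightarrow> bool" where
  "is_tt_rep d n r G \<longleftrightarrow> r 0 = 1 \<and> r d = 1 \<and>
     (\<forall>mu\<in>{1..d}. \<forall>j\<in>{1..n mu}. G mu j \<in> carrier_mat (r (mu - 1)) (r mu))"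

definition msum :: "nat \<Rightarrow> nat \<Rightarrow> ('b \<Rightarrow> real mat) \<Rightarrow> 'b set \<Rightarrow> real mat" where
  "msum nr nc f S = mat nr nc (\<lambda>(a,b). \<Sum>x\<in>S. f x $$ (a,b))"

definition left_orth :: "(nat \<Rightarrow> nat) \<Rightarrow> (nat \<Rightarrow> nat) \<Rightarrow> (nat \<Rightarrow> nat \<Rightarrow> real mat) \<Rightarrow> nat \<Rightarrow> bool" where
  "left_orth n r G mu \<longleftrightarrow>
     msum (r mu) (r mu) (\<lambda>j. (G mu j)\<^sup>T * G mu j) {1..n mu} = 1\<^sub>m (r mu)"

definition right_orth :: "(nat \<Rightarrow> nat) \<Rightarrow> (nat \<Rightarrow> nat) \<Rightarrow> (nat \<Rightarrow> nat \<Rightarrow> real mat) \<Rightarrow> nat \<Rightarrow> bool" where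
  "right_orth n r G mu \<longleftrightarrow>
     msum (r (mu - 1)) (r (mu - 1)) (\<lambda>j. G mu j * (G mu j)\<^sup>T) {1..n mu} = 1\<^sub>m (r (mu - 1))"

fun left_prod :: "(nat \<Rightarrow> nat \<Rightarrow> real mat) \<Rightarrow> (nat \<Rightarrow> nat) \<Rightarrow> nat \<Rightarrow> real mat" where
  "left_prod G i 0 = 1\<^sub>m 1"
| "left_prod G i (Suc k) = left_prod G i k * G (Suc k) (i (Suc k))"

text \<open>Auxiliary: right_prod_aux G d i m = G_{d-m+1}(i_{d-m+1}) ... G_d(i_d).\<close>
fun right_prod_aux :: "(nat \<Rightarrow> nat \<Rightarrow> real mat) \<Rightarrow> nat \<Rightarrow> (nat \<Rightarrow> nat) \<Rightarrow> nat \<Rightarrow> real mat" where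
  "right_prod_aux G d i 0 = 1\<^sub>m 1"
| "right_prod_aux G d i (Suc m) = G (d - m) (i (d - m)) * right_prod_aux G d i m"

definition right_prod :: "(nat \<Rightarrow> nat \<Rightarrow> real mat) \<Rightarrow> nat \<Rightarrow> (nat \<Rightarrow> nat) \<Rightarrow> nat \<Rightarrow> real mat" where
  "right_prod G d i k = right_prod_aux G d i (d - k)"

definition tt_tensor :: "nat \<Rightarrow> (nat \<Rightarrow> nat \<Rightarrow> real mat) \<Rightarrow> (nat \<Rightarrow> nat) \<Rightarrow> real" where
  "tt_tensor d G i = left_prod G i d $$ (0, 0)"

definition frob_norm :: "nat \<Rightarrow> (nat \<Rightarrow> nat) \<Rightarrow> ((nat \<Rightarrow> nat) \<Rightarrow> real) \<Rightarrow> real" where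
  "frob_norm d n X = sqrt (\<Sum>i\<in>tt_index_set d n. (X i)\<^sup>2)"

text \<open>(H^{<s})^T K^{<s}: sum over the row multi-indices (i_1,...,i_{s-1}).\<close>
definition left_gram :: "(nat \<Rightarrow> nat) \<Rightarrow> (nat \<Rightarrow> nat) \<Rightarrow> (nat \<Rightarrow> nat \<Rightarrow> real mat) \<Rightarrow> (nat \<Rightarrow> nat \<Rightarrow> real mat) \<Rightarrow> nat \<Rightarrow> real mat" where
  "left_gram r n H K s = msum (r (s - 1)) (r (s - 1))
     (\<lambda>l. (left_prod H l (s - 1))\<^sup>T * left_prod K l (s - 1)) (PiE {1..s - 1} (\<lambda>mu. {1..n mu}))"

text \<open>K^{>s} (H^{>s})^T: sum over the column multi-indices (i_{s+1},...,i_d).\<close>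
definition right_gram :: "nat \<Rightarrow> (nat \<Rightarrow> nat) \<Rightarrow> (nat \<Rightarrow> nat) \<Rightarrow> (nat \<Rightarrow> nat \<Rightarrow> real mat) \<Rightarrow> (nat \<Rightarrow> nat \<Rightarrow> real mat) \<Rightarrow> nat \<Rightarrow> real mat" where
  "right_gram d n r K H s = msum (r s) (r s)
     (\<lambda>l. right_prod K d l s * (right_prod H d l s)\<^sup>T) (PiE {s + 1..d} (\<lambda>mu. {1..n mu}))"

end

theory Submission
  imports Defs
begin

lemma mult_entry:
  assumes "A \<in> carrier_mat n1 n2" "B \<in> carrier_mat n2 n3" "i < n1" "j < n3"
  shows "(A * B) $$ (i,j) = (\<Sum>k<n2. A $$ (i,k) * B $$ (k,j))"
  using assms by (auto simp: scalar_prod_def lessThan_atLeast0)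

lemma left_prod_carrier:
  assumes "r 0 = 1" "\<forall>mu\<in>{1..k}. F mu (i mu) \<in> carrier_mat (r (mu-1)) (r mu)"
  shows "left_prod F i k \<in> carrier_mat 1 (r k)"
  using assms(2)
proof (induction k)
  case 0 then show ?case using assms(1) by simp
next
  case (Suc k)
  have "F (Suc k) (i (Suc k)) \<in> carrier_mat (r k) (r (Suc k))" using Suc.prems by force
  moreover have "left_prod F i k \<in> carrier_mat 1 (r k)" using Suc by auto
  ultimately show ?case by auto
qed

lemma right_aux_carrier:
  assumes "r d = 1" "m \<le> d" "\<forall>mu. d - m < mu \<and> mu \<le> d \<longrightarrow> F mu (i mu) \<in> carrier_mat (r (mu-1)) (r mu)"
  shows "right_prod_aux F d i m \<in> carrier_mat (r (d - m)) 1"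
  using assms(2,3)
proof (induction m)
  case 0 then show ?case using assms(1) by simp
next
  case (Suc m)
  have "F (d - m) (i (d - m)) \<in> carrier_mat (r (d - m - 1)) (r (d - m))" using Suc.prems
    by (metis Suc_le_lessD diff_less_mono2 lessI zero_less_diff diff_le_self)
  moreover have "\<forall>mu. d - m < mu \<and> mu \<le> d \<longrightarrow> F mu (i mu) \<in> carrier_mat (r (mu-1)) (r mu)"
    using Suc.prems by auto
  then have "right_prod_aux F d i m \<in> carrier_mat (r (d - m)) 1" using Suc.IH Suc.prems by auto
  moreover have "d - m - 1 = d - Suc m" by simp
  ultimately show ?case by auto
qed

lemma right_prod_carrier:
  assumes "r d = 1" "k \<le> d" "\<forall>mu\<in>{Suc k..d}. F mu (i mu) \<in> carrier_mat (r (mu-1)) (r mu)"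
  shows "right_prod F d i k \<in> carrier_mat (r k) 1"
  using right_aux_carrier[of r d "d - k" F i] assms unfolding right_prod_def by auto

lemma left_prod_cong:
  "\<forall>mu\<in>{1..k}. F mu (i mu) = F' mu (i' mu) \<Longrightarrow> left_prod F i k = left_prod F' i' k"
  by (induction k) auto

lemma right_aux_cong:
  "m \<le> d \<Longrightarrow> \<forall>mu. d - m < mu \<and> mu \<le> d \<longrightarrow> F mu (i mu) = F' mu (i' mu)
   \<Longrightarrow> right_prod_aux F d i m = right_prod_aux F' d i' m"
proof (induction m)
  case 0 then show ?case by simp
next
  case (Suc m)
  then have "F (d - m) (i (d - m)) = F' (d - m) (i' (d - m))" by auto
  moreover have "\<forall>mu. d - m < mu \<and> mu \<le> d \<longrightarrow> F mu (i mu) = F' mu (i' mu)"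
    using Suc.prems by auto
  then have "right_prod_aux F d i m = right_prod_aux F' d i' m" using Suc.IH Suc.prems by auto
  ultimately show ?case by simp
qed

lemma right_prod_cong:
  "k \<le> d \<Longrightarrow> \<forall>mu\<in>{Suc k..d}. F mu (i mu) = F' mu (i' mu)
   \<Longrightarrow> right_prod F d i k = right_prod F' d i' k"
  unfolding right_prod_def by (rule right_aux_cong) auto

lemma right_prod_step:
  assumes "k < d"
  shows "right_prod F d i k = F (Suc k) (i (Suc k)) * right_prod F d i (Suc k)"
proof -
  have "d - k = Suc (d - Suc k)" using assms by simp
  moreover have "d - (d - Suc k) = Suc k" using assms by simp
  ultimately show ?thesis unfolding right_prod_def by simp
qed

lemma right_prod_d: "right_prod F d i d = 1\<^sub>m 1"
  unfolding right_prod_def by simp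

lemma full_split:
  assumes "r 0 = 1" "r d = 1" "k \<le> d"
    "\<forall>mu\<in>{1..d}. F mu (i mu) \<in> carrier_mat (r (mu-1)) (r mu)"
  shows "left_prod F i d = left_prod F i k * right_prod F d i k"
  using assms(3)
proof (induction "d - k" arbitrary: k)
  case 0
  then have "k = d" by simp
  moreover have "left_prod F i d \<in> carrier_mat 1 1"
    using left_prod_carrier[of r d F i] assms by auto
  ultimately show ?case by (simp add: right_prod_d)
next
  case (Suc x)
  then have kd: "k < d" by simp
  have IH: "left_prod F i d = left_prod F i (Suc k) * right_prod F d i (Suc k)"
    using Suc.hyps(1)[of "Suc k"] Suc.hyps(2) kd by simp
  have c1: "left_prod F i k \<in> carrier_mat 1 (r k)"
    using left_prod_carrier[of r k F i] assms kd by auto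
  have c2: "F (Suc k) (i (Suc k)) \<in> carrier_mat (r k) (r (Suc k))" using assms kd by force
  have c3: "right_prod F d i (Suc k) \<in> carrier_mat (r (Suc k)) 1"
    using right_prod_carrier[of r d "Suc k" F i] assms kd by auto
  have "left_prod F i k * right_prod F d i k = left_prod F i k * (F (Suc k) (i (Suc k)) * right_prod F d i (Suc k))"
    using kd by (simp add: right_prod_step)
  also have "\<dots> = (left_prod F i k * F (Suc k) (i (Suc k))) * right_prod F d i (Suc k)"
    using c1 c2 c3 by (simp add: assoc_mult_mat)
  finally show ?case using IH by simp
qed

lemma tt_expand:
  assumes "r 0 = 1" "r d = 1" "1 \<le> s" "s \<le> d"
    "\<forall>mu\<in>{1..d}. F mu (i mu) \<in> carrier_mat (r (mu-1)) (r mu)"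
  shows "tt_tensor d F i = (\<Sum>a<r (s-1). \<Sum>b<r s.
     left_prod F i (s-1) $$ (0,a) * F s (i s) $$ (a,b) * right_prod F d i s $$ (b,0))"
proof -
  have cL: "left_prod F i (s-1) \<in> carrier_mat 1 (r (s-1))"
  proof (rule left_prod_carrier[where r=r, OF assms(1)])
    show "\<forall>mu\<in>{1..s-1}. F mu (i mu) \<in> carrier_mat (r (mu-1)) (r mu)"
    proof
      fix mu assume "mu \<in> {1..s-1}"
      then have "mu \<in> {1..d}" using assms(4) by auto
      then show "F mu (i mu) \<in> carrier_mat (r (mu-1)) (r mu)" using assms(5) by blast
    qed
  qed
  have sI: "s \<in> {1..d}" using assms(3,4) by simp
  have cX: "F s (i s) \<in> carrier_mat (r (s-1)) (r s)" using assms(5) sI by blast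
  have cR: "right_prod F d i s \<in> carrier_mat (r s) 1"
  proof (rule right_prod_carrier[where r=r, OF assms(2,4)])
    show "\<forall>mu\<in>{Suc s..d}. F mu (i mu) \<in> carrier_mat (r (mu-1)) (r mu)"
    proof
      fix mu assume "mu \<in> {Suc s..d}"
      then have "mu \<in> {1..d}" by auto
      then show "F mu (i mu) \<in> carrier_mat (r (mu-1)) (r mu)" using assms(5) by blast
    qed
  qed
  have ls: "left_prod F i s = left_prod F i (s-1) * F s (i s)"
  proof -
    have "s = Suc (s-1)" using assms(3) by simp
    then show ?thesis using left_prod.simps(2)[of F i "s-1"] by simp
  qed
  have "tt_tensor d F i = (left_prod F i (s-1) * F s (i s) * right_prod F d i s) $$ (0,0)"
    unfolding tt_tensor_def using full_split[of r d s F i, OF assms(1,2,4,5)] ls by simp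
  also have "\<dots> = (\<Sum>b<r s. (left_prod F i (s-1) * F s (i s)) $$ (0,b) * right_prod F d i s $$ (b,0))"
    using cL cX cR by (intro mult_entry) auto
  also have "\<dots> = (\<Sum>b<r s. (\<Sum>a<r (s-1). left_prod F i (s-1) $$ (0,a) * F s (i s) $$ (a,b)) * right_prod F d i s $$ (b,0))"
  proof (intro sum.cong refl)
    fix b assume "b \<in> {..<r s}"
    then show "(left_prod F i (s-1) * F s (i s)) $$ (0,b) * right_prod F d i s $$ (b,0) =
      (\<Sum>a<r (s-1). left_prod F i (s-1) $$ (0,a) * F s (i s) $$ (a,b)) * right_prod F d i s $$ (b,0)"
      using mult_entry[OF cL cX, of 0 b] by simp
  qed
  also have "\<dots> = (\<Sum>b<r s. \<Sum>a<r (s-1). left_prod F i (s-1) $$ (0,a) * F s (i s) $$ (a,b) * right_prod F d i s $$ (b,0))"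
    by (simp add: sum_distrib_right)
  also have "\<dots> = (\<Sum>a<r (s-1). \<Sum>b<r s. left_prod F i (s-1) $$ (0,a) * F s (i s) $$ (a,b) * right_prod F d i s $$ (b,0))"
    by (rule sum.swap)
  finally show ?thesis .
qed
lemma sum_PiE_insert:
  assumes "x \<notin> S"
  shows "(\<Sum>f\<in>PiE (insert x S) T. h f) = (\<Sum>y\<in>T x. \<Sum>g\<in>PiE S T. h (g(x:=y)))"
proof -
  have "(\<Sum>y\<in>T x. \<Sum>g\<in>PiE S T. h (g(x:=y))) = (\<Sum>(y,g)\<in>T x \<times> PiE S T. h (g(x:=y)))"
    by (rule sum.cartesian_product)
  also have "\<dots> = (\<Sum>f\<in>PiE (insert x S) T. h f)"
  proof (rule sum.reindex_bij_witness[where i="\<lambda>f. (f x, f(x:=undefined))" and j="\<lambda>(y,g). g(x:=y)"])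
    fix a assume a: "a \<in> T x \<times> PiE S T"
    show "(\<lambda>f. (f x, f(x := undefined))) (case a of (y, g) \<Rightarrow> g(x := y)) = a"
      using a assms by (auto simp: PiE_iff extensional_def fun_eq_iff)
    show "(case a of (y, g) \<Rightarrow> g(x := y)) \<in> PiE (insert x S) T"
      using a assms by (auto simp: PiE_iff extensional_def)
    show "h (case a of (y, g) \<Rightarrow> g(x := y)) = (case a of (y, g) \<Rightarrow> h (g(x := y)))"
      by (simp split: prod.split)
  next
    fix b assume b: "b \<in> PiE (insert x S) T"
    show "(case (b x, b(x := undefined)) of (y, g) \<Rightarrow> g(x := y)) = b" by simp
    show "(b x, b(x := undefined)) \<in> T x \<times> PiE S T"
      using b assms by (auto simp: PiE_iff extensional_def)
  qed
  finally show ?thesis ..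
qed

lemma swap3: "(\<Sum>g\<in>S. \<Sum>c\<in>A. \<Sum>c'\<in>B. f g c c') = (\<Sum>c\<in>A. \<Sum>c'\<in>B. \<Sum>g\<in>S. f g c c')"
proof -
  have "(\<Sum>g\<in>S. \<Sum>c\<in>A. \<Sum>c'\<in>B. f g c c') = (\<Sum>c\<in>A. \<Sum>g\<in>S. \<Sum>c'\<in>B. f g c c')"
    by (rule sum.swap)
  also have "\<dots> = (\<Sum>c\<in>A. \<Sum>c'\<in>B. \<Sum>g\<in>S. f g c c')"
    by (rule sum.cong[OF refl]) (rule sum.swap)
  finally show ?thesis .
qed

lemma delta_collapse:
  fixes m :: nat
  shows "(\<Sum>c<m. \<Sum>c'<m. (y c :: real) * z c' * (if c = c' then 1 else 0)) = (\<Sum>c<m. y c * z c)"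
proof (rule sum.cong[OF refl])
  fix c assume "c \<in> {..<m}"
  then show "(\<Sum>c'<m. y c * z c' * (if c = c' then 1 else 0)) = y c * z c"
  proof -
    have "\<And>x. y c * z x * (if c = x then 1 else 0) = (if c = x then y c * z x else 0)" by simp
    then have "(\<Sum>c'<m. y c * z c' * (if c = c' then 1 else 0)) = (\<Sum>c'<m. if c = c' then y c * z c' else 0)"
      by simp
    also have "\<dots> = y c * z c" using \<open>c \<in> {..<m}\<close> by (subst sum.delta') auto
    finally show ?thesis .
  qed
qed

lemma quad_expand:
  fixes x :: "'g \<Rightarrow> nat \<Rightarrow> real" and m :: nat
  shows "(\<Sum>g\<in>S. (\<Sum>c<m. x g c * y c) * (\<Sum>c'<m. x g c' * z c'))
       = (\<Sum>c<m. \<Sum>c'<m. y c * z c' * (\<Sum>g\<in>S. x g c * x g c'))"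
proof -
  have "(\<Sum>g\<in>S. (\<Sum>c<m. x g c * y c) * (\<Sum>c'<m. x g c' * z c'))
      = (\<Sum>g\<in>S. \<Sum>c<m. \<Sum>c'<m. y c * z c' * (x g c * x g c'))"
    by (simp add: sum_product mult_ac)
  also have "\<dots> = (\<Sum>c<m. \<Sum>c'<m. \<Sum>g\<in>S. y c * z c' * (x g c * x g c'))"
    by (rule swap3)
  also have "\<dots> = (\<Sum>c<m. \<Sum>c'<m. y c * z c' * (\<Sum>g\<in>S. x g c * x g c'))"
    by (simp add: sum_distrib_left)
  finally show ?thesis .
qed

lemma msum_entry: "a < nr \<Longrightarrow> b < nc \<Longrightarrow> msum nr nc f S $$ (a,b) = (\<Sum>x\<in>S. f x $$ (a,b))"
  unfolding msum_def by simp

lemma left_gram_id: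
  assumes r0: "r 0 = 1"
  shows "\<forall>mu\<in>{1..k}. \<forall>j\<in>{1..n mu}. G mu j \<in> carrier_mat (r (mu-1)) (r mu) \<Longrightarrow>
    \<forall>mu\<in>{1..k}. left_orth n r G mu \<Longrightarrow> a < r k \<Longrightarrow> a' < r k \<Longrightarrow>
    (\<Sum>l\<in>PiE {1..k} (\<lambda>mu. {1..n mu}). left_prod G l k $$ (0,a) * left_prod G l k $$ (0,a'))
     = (if a = a' then 1 else 0)"
proof (induction k arbitrary: a a')
  case 0
  then show ?case using r0 by simp
next
  case (Suc k)
  define T where "T = (\<lambda>mu::nat. {1..n mu})"
  have ins: "{1..Suc k} = insert (Suc k) {1..k}" by auto
  have dimsk: "\<forall>mu\<in>{1..k}. \<forall>j\<in>{1..n mu}. G mu j \<in> carrier_mat (r (mu-1)) (r mu)"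
    using Suc.prems(1) by auto
  have lok: "\<forall>mu\<in>{1..k}. left_orth n r G mu" using Suc.prems(2) by auto
  have IH: "\<And>c c'. c < r k \<Longrightarrow> c' < r k \<Longrightarrow>
    (\<Sum>l\<in>PiE {1..k} T. left_prod G l k $$ (0,c) * left_prod G l k $$ (0,c')) = (if c = c' then 1 else 0)"
    using Suc.IH[OF dimsk lok] unfolding T_def by blast
  have cY: "\<And>y. y \<in> T (Suc k) \<Longrightarrow> G (Suc k) y \<in> carrier_mat (r k) (r (Suc k))"
    using Suc.prems(1) unfolding T_def by force
  have entry: "\<And>g y b. g \<in> PiE {1..k} T \<Longrightarrow> y \<in> T (Suc k) \<Longrightarrow> b < r (Suc k) \<Longrightarrow>
     left_prod G (g(Suc k := y)) (Suc k) $$ (0,b) = (\<Sum>c<r k. left_prod G g k $$ (0,c) * G (Suc k) y $$ (c,b))"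
  proof -
    fix g y b assume g: "g \<in> PiE {1..k} T" and y: "y \<in> T (Suc k)" and b: "b < r (Suc k)"
    have "left_prod G (g(Suc k := y)) k = left_prod G g k"
      by (rule left_prod_cong) auto
    then have eq: "left_prod G (g(Suc k := y)) (Suc k) = left_prod G g k * G (Suc k) y" by simp
    have cL: "left_prod G g k \<in> carrier_mat 1 (r k)"
    proof (rule left_prod_carrier[where r=r, OF r0])
      show "\<forall>mu\<in>{1..k}. G mu (g mu) \<in> carrier_mat (r (mu - 1)) (r mu)"
      proof
        fix mu assume mu: "mu \<in> {1..k}"
        then have "g mu \<in> {1..n mu}" using g unfolding T_def by (auto simp: PiE_iff)
        then show "G mu (g mu) \<in> carrier_mat (r (mu - 1)) (r mu)" using dimsk mu by blast
      qed
    qed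
    show "left_prod G (g(Suc k := y)) (Suc k) $$ (0,b) = (\<Sum>c<r k. left_prod G g k $$ (0,c) * G (Suc k) y $$ (c,b))"
      unfolding eq by (rule mult_entry[OF cL cY[OF y]]) (use b in auto)
  qed
  have "(\<Sum>l\<in>PiE {1..Suc k} T. left_prod G l (Suc k) $$ (0,a) * left_prod G l (Suc k) $$ (0,a'))
     = (\<Sum>y\<in>T (Suc k). \<Sum>g\<in>PiE {1..k} T. left_prod G (g(Suc k := y)) (Suc k) $$ (0,a) * left_prod G (g(Suc k := y)) (Suc k) $$ (0,a'))"
    unfolding ins by (rule sum_PiE_insert) auto
  also have "\<dots> = (\<Sum>y\<in>T (Suc k). \<Sum>g\<in>PiE {1..k} T.
       (\<Sum>c<r k. left_prod G g k $$ (0,c) * G (Suc k) y $$ (c,a)) * (\<Sum>c'<r k. left_prod G g k $$ (0,c') * G (Suc k) y $$ (c',a')))"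
    using entry Suc.prems(3,4) by (intro sum.cong refl) simp
  also have "\<dots> = (\<Sum>y\<in>T (Suc k). \<Sum>c<r k. \<Sum>c'<r k. G (Suc k) y $$ (c,a) * G (Suc k) y $$ (c',a') * (if c = c' then 1 else 0))"
  proof (intro sum.cong refl)
    fix y
    show "(\<Sum>g\<in>PiE {1..k} T.
       (\<Sum>c<r k. left_prod G g k $$ (0,c) * G (Suc k) y $$ (c,a)) * (\<Sum>c'<r k. left_prod G g k $$ (0,c') * G (Suc k) y $$ (c',a')))
      = (\<Sum>c<r k. \<Sum>c'<r k. G (Suc k) y $$ (c,a) * G (Suc k) y $$ (c',a') * (if c = c' then 1 else 0))"
      unfolding quad_expand[where x="\<lambda>g c. left_prod G g k $$ (0,c)"]
    proof (intro sum.cong refl)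
      fix c c' assume "c \<in> {..<r k}" "c' \<in> {..<r k}"
      then have "(\<Sum>g\<in>PiE {1..k} T. left_prod G g k $$ (0,c) * left_prod G g k $$ (0,c')) = (if c = c' then 1 else 0)"
        by (intro IH) auto
      then show "G (Suc k) y $$ (c, a) * G (Suc k) y $$ (c', a') *
           (\<Sum>g\<in>PiE {1..k} T. left_prod G g k $$ (0, c) * left_prod G g k $$ (0, c')) =
           G (Suc k) y $$ (c, a) * G (Suc k) y $$ (c', a') * (if c = c' then 1 else 0)" by simp
    qed
  qed
  also have "\<dots> = (\<Sum>y\<in>T (Suc k). \<Sum>c<r k. G (Suc k) y $$ (c,a) * G (Suc k) y $$ (c,a'))"
    by (simp add: delta_collapse)
  also have "\<dots> = (\<Sum>y\<in>T (Suc k). ((G (Suc k) y)\<^sup>T * G (Suc k) y) $$ (a,a'))"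
  proof (intro sum.cong refl)
    fix y assume y: "y \<in> T (Suc k)"
    have cT: "(G (Suc k) y)\<^sup>T \<in> carrier_mat (r (Suc k)) (r k)" using cY[OF y] by auto
    show "(\<Sum>c<r k. G (Suc k) y $$ (c,a) * G (Suc k) y $$ (c,a')) = ((G (Suc k) y)\<^sup>T * G (Suc k) y) $$ (a,a')"
      using mult_entry[OF cT cY[OF y], of a a'] Suc.prems(3,4) cY[OF y] by simp
  qed
  also have "\<dots> = msum (r (Suc k)) (r (Suc k)) (\<lambda>j. (G (Suc k) j)\<^sup>T * G (Suc k) j) {1..n (Suc k)} $$ (a,a')"
    using Suc.prems(3,4) by (simp add: msum_entry T_def)
  also have "\<dots> = (if a = a' then 1 else 0)"
    using Suc.prems(2,3,4) unfolding left_orth_def by force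
  finally show ?case unfolding T_def .
qed

lemma right_gram_id:
  assumes rd: "r d = 1"
  shows "k \<le> d \<Longrightarrow> \<forall>mu\<in>{Suc k..d}. \<forall>j\<in>{1..n mu}. G mu j \<in> carrier_mat (r (mu-1)) (r mu) \<Longrightarrow>
    \<forall>mu\<in>{Suc k..d}. right_orth n r G mu \<Longrightarrow> b < r k \<Longrightarrow> b' < r k \<Longrightarrow>
    (\<Sum>u\<in>PiE {Suc k..d} (\<lambda>mu. {1..n mu}). right_prod G d u k $$ (b,0) * right_prod G d u k $$ (b',0))
     = (if b = b' then 1 else 0)"
proof (induction "d - k" arbitrary: k b b')
  case 0
  then have "k = d" by simp
  then show ?case using rd 0 by (simp add: right_prod_d)
next
  case (Suc x k)
  define T where "T = (\<lambda>mu::nat. {1..n mu})"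
  have kd: "k < d" using Suc.hyps(2) by simp
  have ins: "{Suc k..d} = insert (Suc k) {Suc (Suc k)..d}" using kd by auto
  have dimsk: "\<forall>mu\<in>{Suc (Suc k)..d}. \<forall>j\<in>{1..n mu}. G mu j \<in> carrier_mat (r (mu-1)) (r mu)"
    using Suc.prems(2) by auto
  have rok: "\<forall>mu\<in>{Suc (Suc k)..d}. right_orth n r G mu" using Suc.prems(3) by auto
  have IH: "\<And>c c'. c < r (Suc k) \<Longrightarrow> c' < r (Suc k) \<Longrightarrow>
    (\<Sum>u\<in>PiE {Suc (Suc k)..d} T. right_prod G d u (Suc k) $$ (c,0) * right_prod G d u (Suc k) $$ (c',0)) = (if c = c' then 1 else 0)"
    using Suc.hyps(1)[of "Suc k"] Suc.hyps(2) kd dimsk rok unfolding T_def by auto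
  have cY: "\<And>y. y \<in> T (Suc k) \<Longrightarrow> G (Suc k) y \<in> carrier_mat (r k) (r (Suc k))"
    using Suc.prems(2) kd unfolding T_def by force
  have entry: "\<And>g y b. g \<in> PiE {Suc (Suc k)..d} T \<Longrightarrow> y \<in> T (Suc k) \<Longrightarrow> b < r k \<Longrightarrow>
     right_prod G d (g(Suc k := y)) k $$ (b,0) = (\<Sum>c<r (Suc k). right_prod G d g (Suc k) $$ (c,0) * G (Suc k) y $$ (b,c))"
  proof -
    fix g y b assume g: "g \<in> PiE {Suc (Suc k)..d} T" and y: "y \<in> T (Suc k)" and b: "b < r k"
    have "right_prod G d (g(Suc k := y)) (Suc k) = right_prod G d g (Suc k)"
      by (rule right_prod_cong) (use kd in auto)
    then have eq: "right_prod G d (g(Suc k := y)) k = G (Suc k) y * right_prod G d g (Suc k)"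
      using right_prod_step[OF kd] by simp
    have cR: "right_prod G d g (Suc k) \<in> carrier_mat (r (Suc k)) 1"
    proof (rule right_prod_carrier[where r=r, OF rd])
      show "Suc k \<le> d" using kd by simp
      show "\<forall>mu\<in>{Suc (Suc k)..d}. G mu (g mu) \<in> carrier_mat (r (mu - 1)) (r mu)"
      proof
        fix mu assume mu: "mu \<in> {Suc (Suc k)..d}"
        then have "g mu \<in> {1..n mu}" using g unfolding T_def by (auto simp: PiE_iff)
        then show "G mu (g mu) \<in> carrier_mat (r (mu - 1)) (r mu)" using dimsk mu by blast
      qed
    qed
    show "right_prod G d (g(Suc k := y)) k $$ (b,0) = (\<Sum>c<r (Suc k). right_prod G d g (Suc k) $$ (c,0) * G (Suc k) y $$ (b,c))"
      unfolding eq using mult_entry[OF cY[OF y] cR, of b 0] b by (simp add: mult.commute)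
  qed
  have "(\<Sum>u\<in>PiE {Suc k..d} T. right_prod G d u k $$ (b,0) * right_prod G d u k $$ (b',0))
     = (\<Sum>y\<in>T (Suc k). \<Sum>g\<in>PiE {Suc (Suc k)..d} T. right_prod G d (g(Suc k := y)) k $$ (b,0) * right_prod G d (g(Suc k := y)) k $$ (b',0))"
    unfolding ins by (rule sum_PiE_insert) auto
  also have "\<dots> = (\<Sum>y\<in>T (Suc k). \<Sum>g\<in>PiE {Suc (Suc k)..d} T.
       (\<Sum>c<r (Suc k). right_prod G d g (Suc k) $$ (c,0) * G (Suc k) y $$ (b,c)) * (\<Sum>c'<r (Suc k). right_prod G d g (Suc k) $$ (c',0) * G (Suc k) y $$ (b',c')))"
    using entry Suc.prems(4,5) by (intro sum.cong refl) simp
  also have "\<dots> = (\<Sum>y\<in>T (Suc k). \<Sum>c<r (Suc k). \<Sum>c'<r (Suc k). G (Suc k) y $$ (b,c) * G (Suc k) y $$ (b',c') * (if c = c' then 1 else 0))"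
  proof (intro sum.cong refl)
    fix y
    show "(\<Sum>g\<in>PiE {Suc (Suc k)..d} T.
       (\<Sum>c<r (Suc k). right_prod G d g (Suc k) $$ (c,0) * G (Suc k) y $$ (b,c)) * (\<Sum>c'<r (Suc k). right_prod G d g (Suc k) $$ (c',0) * G (Suc k) y $$ (b',c')))
      = (\<Sum>c<r (Suc k). \<Sum>c'<r (Suc k). G (Suc k) y $$ (b,c) * G (Suc k) y $$ (b',c') * (if c = c' then 1 else 0))"
      unfolding quad_expand[where x="\<lambda>g c. right_prod G d g (Suc k) $$ (c,0)"]
    proof (intro sum.cong refl)
      fix c c' assume "c \<in> {..<r (Suc k)}" "c' \<in> {..<r (Suc k)}"
      then have "(\<Sum>g\<in>PiE {Suc (Suc k)..d} T. right_prod G d g (Suc k) $$ (c,0) * right_prod G d g (Suc k) $$ (c',0)) = (if c = c' then 1 else 0)"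
        by (intro IH) auto
      then show "G (Suc k) y $$ (b, c) * G (Suc k) y $$ (b', c') *
           (\<Sum>g\<in>PiE {Suc (Suc k)..d} T. right_prod G d g (Suc k) $$ (c,0) * right_prod G d g (Suc k) $$ (c',0)) =
           G (Suc k) y $$ (b, c) * G (Suc k) y $$ (b', c') * (if c = c' then 1 else 0)" by simp
    qed
  qed
  also have "\<dots> = (\<Sum>y\<in>T (Suc k). \<Sum>c<r (Suc k). G (Suc k) y $$ (b,c) * G (Suc k) y $$ (b',c))"
    by (simp add: delta_collapse)
  also have "\<dots> = (\<Sum>y\<in>T (Suc k). (G (Suc k) y * (G (Suc k) y)\<^sup>T) $$ (b,b'))"
  proof (intro sum.cong refl)
    fix y assume y: "y \<in> T (Suc k)"
    have cT: "(G (Suc k) y)\<^sup>T \<in> carrier_mat (r (Suc k)) (r k)" using cY[OF y] by auto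
    show "(\<Sum>c<r (Suc k). G (Suc k) y $$ (b,c) * G (Suc k) y $$ (b',c)) = (G (Suc k) y * (G (Suc k) y)\<^sup>T) $$ (b,b')"
      using mult_entry[OF cY[OF y] cT, of b b'] Suc.prems(4,5) cY[OF y] by simp
  qed
  also have "\<dots> = msum (r (Suc k - 1)) (r (Suc k - 1)) (\<lambda>j. G (Suc k) j * (G (Suc k) j)\<^sup>T) {1..n (Suc k)} $$ (b,b')"
    using Suc.prems(4,5) by (simp add: msum_entry T_def)
  also have "\<dots> = (if b = b' then 1 else 0)"
  proof -
    have "right_orth n r G (Suc k)" using Suc.prems(3) kd by auto
    then show ?thesis using Suc.prems(4,5) unfolding right_orth_def by simp
  qed
  finally show ?case unfolding T_def .
qed

lemma split_sum:
  fixes p q :: "(nat \<Rightarrow> nat) \<Rightarrow> real"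
  assumes s1: "1 \<le> s" and sd: "s \<le> d" and j: "j \<in> {1..n s}"
    and p: "\<And>i i'. (\<forall>mu\<in>{1..s-1}. i mu = i' mu) \<Longrightarrow> p i = p i'"
    and q: "\<And>i i'. (\<forall>mu\<in>{Suc s..d}. i mu = i' mu) \<Longrightarrow> q i = q i'"
  shows "(\<Sum>i\<in>{i\<in>tt_index_set d n. i s = j}. p i * q i)
       = (\<Sum>l\<in>PiE {1..s-1} (\<lambda>mu. {1..n mu}). p l) * (\<Sum>u\<in>PiE {Suc s..d} (\<lambda>mu. {1..n mu}). q u)"
proof -
  define T where "T = (\<lambda>mu::nat. {1..n mu})"
  define mg where "mg = (\<lambda>(l::nat\<Rightarrow>nat,u::nat\<Rightarrow>nat). (\<lambda>m. if m \<in> {1..s-1} then l m else if m = s then j else u m))"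
  have "(\<Sum>l\<in>PiE {1..s-1} T. p l) * (\<Sum>u\<in>PiE {Suc s..d} T. q u)
      = (\<Sum>l\<in>PiE {1..s-1} T. \<Sum>u\<in>PiE {Suc s..d} T. p l * q u)"
    by (rule sum_product)
  also have "\<dots> = (\<Sum>(l,u)\<in>PiE {1..s-1} T \<times> PiE {Suc s..d} T. p l * q u)"
    by (rule sum.cartesian_product)
  also have "\<dots> = (\<Sum>i\<in>{i\<in>tt_index_set d n. i s = j}. p i * q i)"
  proof (rule sum.reindex_bij_witness[where j=mg and i="\<lambda>i. (restrict i {1..s-1}, restrict i {Suc s..d})"])
    fix a assume a: "a \<in> PiE {1..s-1} T \<times> PiE {Suc s..d} T"
    obtain l u where a_eq: "a = (l,u)" by force
    have l: "l \<in> PiE {1..s-1} T" and u: "u \<in> PiE {Suc s..d} T" using a a_eq by auto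
    show "(restrict (mg a) {1..s-1}, restrict (mg a) {Suc s..d}) = a"
      using l u unfolding a_eq mg_def by (auto simp: PiE_iff extensional_def fun_eq_iff)
    show "mg a \<in> {i\<in>tt_index_set d n. i s = j}"
      using l u j s1 sd unfolding a_eq mg_def tt_index_set_def T_def
      by (auto simp: PiE_iff extensional_def)
    have "p (mg a) = p l" by (rule p) (simp add: a_eq mg_def)
    moreover have "q (mg a) = q u" by (rule q) (auto simp: a_eq mg_def)
    ultimately show "p (mg a) * q (mg a) = (case a of (l, u) \<Rightarrow> p l * q u)" by (simp add: a_eq)
  next
    fix b assume b: "b \<in> {i\<in>tt_index_set d n. i s = j}"
    then have bI: "b \<in> PiE {1..d} T" and bs: "b s = j" unfolding tt_index_set_def T_def by auto
    show "mg (restrict b {1..s-1}, restrict b {Suc s..d}) = b"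
      using bI bs s1 sd unfolding mg_def by (auto simp: PiE_iff extensional_def fun_eq_iff)
    show "(restrict b {1..s-1}, restrict b {Suc s..d}) \<in> PiE {1..s-1} T \<times> PiE {Suc s..d} T"
      using bI sd by (auto simp: PiE_iff)
  qed
  finally show ?thesis unfolding T_def ..
qed

lemma lp_carrier:
  assumes "is_tt_rep d n r G" "k \<le> d" "\<forall>mu\<in>{1..k}. i mu \<in> {1..n mu}"
  shows "left_prod G i k \<in> carrier_mat 1 (r k)"
proof (rule left_prod_carrier[where r=r])
  show "r 0 = 1" using assms(1) unfolding is_tt_rep_def by simp
  show "\<forall>mu\<in>{1..k}. G mu (i mu) \<in> carrier_mat (r (mu - 1)) (r mu)"
  proof
    fix mu assume mu: "mu \<in> {1..k}"
    then have "mu \<in> {1..d}" "i mu \<in> {1..n mu}" using assms(2,3) by auto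
    then show "G mu (i mu) \<in> carrier_mat (r (mu - 1)) (r mu)"
      using assms(1) unfolding is_tt_rep_def by blast
  qed
qed

lemma rp_carrier:
  assumes "is_tt_rep d n r G" "k \<le> d" "\<forall>mu\<in>{Suc k..d}. i mu \<in> {1..n mu}"
  shows "right_prod G d i k \<in> carrier_mat (r k) 1"
proof (rule right_prod_carrier[where r=r])
  show "r d = 1" using assms(1) unfolding is_tt_rep_def by simp
  show "k \<le> d" by fact
  show "\<forall>mu\<in>{Suc k..d}. G mu (i mu) \<in> carrier_mat (r (mu - 1)) (r mu)"
  proof
    fix mu assume mu: "mu \<in> {Suc k..d}"
    then have "mu \<in> {1..d}" "i mu \<in> {1..n mu}" using assms(2,3) by auto
    then show "G mu (i mu) \<in> carrier_mat (r (mu - 1)) (r mu)"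
      using assms(1) unfolding is_tt_rep_def by blast
  qed
qed

lemma delta2:
  fixes f :: "nat \<Rightarrow> nat \<Rightarrow> real" and m k :: nat
  assumes "a < m" "b < k"
  shows "(\<Sum>a'<m. \<Sum>b'<k. f a' b' * ((if a = a' then 1 else 0) * (if b = b' then 1 else 0))) = f a b"
proof -
  have "(\<Sum>a'<m. \<Sum>b'<k. f a' b' * ((if a = a' then 1 else 0) * (if b = b' then 1 else 0)))
      = (\<Sum>a'<m. if a = a' then (\<Sum>b'<k. f a' b' * (if b = b' then 1 else 0)) else 0)"
    by (intro sum.cong refl) auto
  also have "\<dots> = (\<Sum>b'<k. f a b' * (if b = b' then 1 else 0))"
    using assms(1) by (subst sum.delta') auto
  also have "\<dots> = (\<Sum>b'<k. if b = b' then f a b' else 0)"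
    by (intro sum.cong refl) auto
  also have "\<dots> = f a b" using assms(2) by (subst sum.delta') auto
  finally show ?thesis .
qed

theorem theorem3p7:
  fixes d s :: nat and n r :: "nat \<Rightarrow> nat"
    and G Gm :: "nat \<Rightarrow> nat \<Rightarrow> real mat"
    and M :: "(nat \<Rightarrow> nat) \<Rightarrow> real" and P :: "(nat \<Rightarrow> nat) set" and \<alpha> :: real
    and Z Z\<alpha> :: "(nat \<Rightarrow> nat) \<Rightarrow> real" and Gnew :: "nat \<Rightarrow> real mat"
  assumes s: "s \<in> {1..d}"
    and n_pos: "\<forall>mu\<in>{1..d}. n mu \<ge> 1"
    and r_pos: "\<forall>mu\<le>d. r mu \<ge> 1"
    and G: "is_tt_rep d n r G" and Gm: "is_tt_rep d n r Gm"
    and lo: "\<forall>mu\<in>{1..<s}. left_orth n r G mu"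
    and ro: "\<forall>mu\<in>{s<..d}. right_orth n r G mu"
    and P: "P \<subseteq> tt_index_set d n"
    and Z_def: "\<forall>i. Z i = (if i \<in> P then M i else tt_tensor d Gm i)"
    and Z\<alpha>_def: "\<forall>i. Z\<alpha> i = \<alpha> * Z i + (1 - \<alpha>) * tt_tensor d Gm i"
    and Gnew_def: "\<forall>j. Gnew j =
        left_gram r n G Gm s * Gm s j * right_gram d n r Gm G s
        + msum (r (s - 1)) (r s)
            (\<lambda>i. (\<alpha> * (M i - tt_tensor d Gm i)) \<cdot>\<^sub>m
                 ((left_prod G i (s - 1))\<^sup>T * (right_prod G d i s)\<^sup>T))
            {i \<in> P. i s = j}"
  shows "(\<forall>j\<in>{1..n s}. Gnew j \<in> carrier_mat (r (s - 1)) (r s))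
    \<and> (\<forall>H. (\<forall>j\<in>{1..n s}. H j \<in> carrier_mat (r (s - 1)) (r s)) \<longrightarrow>
         frob_norm d n (\<lambda>i. Z\<alpha> i - tt_tensor d (G(s := Gnew)) i)
           \<le> frob_norm d n (\<lambda>i. Z\<alpha> i - tt_tensor d (G(s := H)) i)
         \<and> (frob_norm d n (\<lambda>i. Z\<alpha> i - tt_tensor d (G(s := H)) i)
              = frob_norm d n (\<lambda>i. Z\<alpha> i - tt_tensor d (G(s := Gnew)) i)
            \<longrightarrow> (\<forall>j\<in>{1..n s}. H j = Gnew j)))"
proof -
  define T where "T = (\<lambda>mu::nat. {1..n mu})"
  define I where "I = tt_index_set d n"
  define Lv where "Lv = (\<lambda>i a. left_prod G i (s-1) $$ (0,a))"
  define Rv where "Rv = (\<lambda>i b. right_prod G d i s $$ (b,0))"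
  define Lm where "Lm = (\<lambda>i a. left_prod Gm i (s-1) $$ (0,a))"
  define Rm where "Rm = (\<lambda>i b. right_prod Gm d i s $$ (b,0))"
  define AX where "AX = (\<lambda>(X::nat\<Rightarrow>nat\<Rightarrow>nat\<Rightarrow>real) i. \<Sum>a<r (s-1). \<Sum>b<r s. Lv i a * X (i s) a b * Rv i b)"
  define TT where "TT = (\<lambda>(c::(nat\<Rightarrow>nat)\<Rightarrow>real) j a b. \<Sum>i\<in>{i\<in>I. i s = j}. c i * Lv i a * Rv i b)"
  define Gc where "Gc = (\<lambda>j a b. Gnew j $$ (a,b))"
  have s1: "1 \<le> s" and sd: "s \<le> d" using s by auto
  have r0: "r 0 = 1" and rd: "r d = 1" using G unfolding is_tt_rep_def by auto
  have dimsG: "\<forall>mu\<in>{1..d}. \<forall>j\<in>{1..n mu}. G mu j \<in> carrier_mat (r (mu-1)) (r mu)"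
    using G unfolding is_tt_rep_def by auto
  have dimsGm: "\<forall>mu\<in>{1..d}. \<forall>j\<in>{1..n mu}. Gm mu j \<in> carrier_mat (r (mu-1)) (r mu)"
    using Gm unfolding is_tt_rep_def by auto
  have finI: "finite I" unfolding I_def tt_index_set_def by (intro finite_PiE) auto
  have Imem: "\<And>i mu. i \<in> I \<Longrightarrow> mu \<in> {1..d} \<Longrightarrow> i mu \<in> {1..n mu}"
    unfolding I_def tt_index_set_def by (auto simp: PiE_iff)
  have IsT: "\<And>i. i \<in> I \<Longrightarrow> i s \<in> T s" using Imem s unfolding T_def by blast
  have cLG: "\<And>i. i \<in> I \<Longrightarrow> left_prod G i (s-1) \<in> carrier_mat 1 (r (s-1))"
    by (rule lp_carrier[OF G]) (use sd Imem in auto)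
  have cRG: "\<And>i. i \<in> I \<Longrightarrow> right_prod G d i s \<in> carrier_mat (r s) 1"
    by (rule rp_carrier[OF G]) (use sd Imem in auto)
  have pdep: "\<And>F i i'. \<forall>mu\<in>{1..s-1}. i mu = i' mu \<Longrightarrow> left_prod F i (s-1) = left_prod F i' (s-1)"
    by (rule left_prod_cong) auto
  have qdep: "\<And>F i i'. \<forall>mu\<in>{Suc s..d}. i mu = i' mu \<Longrightarrow> right_prod F d i s = right_prod F d i' s"
    by (rule right_prod_cong) (use sd in auto)

  have orth: "\<And>j a a' b b'. j \<in> T s \<Longrightarrow> a < r (s-1) \<Longrightarrow> a' < r (s-1) \<Longrightarrow> b < r s \<Longrightarrow> b' < r s \<Longrightarrow>
     (\<Sum>i\<in>{i\<in>I. i s = j}. (Lv i a * Lv i a') * (Rv i b * Rv i b'))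
       = (if a = a' then 1 else 0) * (if b = b' then 1 else 0)"
  proof -
    fix j a a' b b' assume j: "j \<in> T s" and a: "a < r (s-1)" "a' < r (s-1)" and b: "b < r s" "b' < r s"
    have "(\<Sum>i\<in>{i\<in>I. i s = j}. (Lv i a * Lv i a') * (Rv i b * Rv i b'))
       = (\<Sum>l\<in>PiE {1..s-1} (\<lambda>mu. {1..n mu}). Lv l a * Lv l a') * (\<Sum>u\<in>PiE {Suc s..d} (\<lambda>mu. {1..n mu}). Rv u b * Rv u b')"
      unfolding I_def
    proof (rule split_sum[OF s1 sd])
      show "j \<in> {1..n s}" using j unfolding T_def by simp
      show "\<And>i i'. \<forall>mu\<in>{1..s-1}. i mu = i' mu \<Longrightarrow> Lv i a * Lv i a' = Lv i' a * Lv i' a'"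
        unfolding Lv_def using pdep by metis
      show "\<And>i i'. \<forall>mu\<in>{Suc s..d}. i mu = i' mu \<Longrightarrow> Rv i b * Rv i b' = Rv i' b * Rv i' b'"
        unfolding Rv_def using qdep by metis
    qed
    also have "(\<Sum>l\<in>PiE {1..s-1} (\<lambda>mu. {1..n mu}). Lv l a * Lv l a') = (if a = a' then 1 else 0)"
      unfolding Lv_def
    proof (rule left_gram_id[where r=r, OF r0])
      show "\<forall>mu\<in>{1..s-1}. \<forall>j\<in>{1..n mu}. G mu j \<in> carrier_mat (r (mu-1)) (r mu)"
        using dimsG sd by auto
      show "\<forall>mu\<in>{1..s-1}. left_orth n r G mu" using lo by auto
    qed (use a in auto)
    also have "(\<Sum>u\<in>PiE {Suc s..d} (\<lambda>mu. {1..n mu}). Rv u b * Rv u b') = (if b = b' then 1 else 0)"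
      unfolding Rv_def
    proof (rule right_gram_id[where r=r and d=d, OF rd sd])
      show "\<forall>mu\<in>{Suc s..d}. \<forall>j\<in>{1..n mu}. G mu j \<in> carrier_mat (r (mu-1)) (r mu)"
        using dimsG s1 by auto
      show "\<forall>mu\<in>{Suc s..d}. right_orth n r G mu" using ro by auto
    qed (use b in auto)
    finally show "(\<Sum>i\<in>{i\<in>I. i s = j}. (Lv i a * Lv i a') * (Rv i b * Rv i b'))
       = (if a = a' then 1 else 0) * (if b = b' then 1 else 0)" .
  qed

  have adj: "\<And>c X. (\<Sum>i\<in>I. c i * AX X i) = (\<Sum>j\<in>T s. \<Sum>a<r (s-1). \<Sum>b<r s. TT c j a b * X j a b)"
  proof -
    fix c X
    have "(\<Sum>i\<in>I. c i * AX X i) = (\<Sum>j\<in>T s. \<Sum>i\<in>{i\<in>I. i s = j}. c i * AX X i)"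
      by (rule sum.group[symmetric]) (use finI IsT in \<open>auto simp: T_def\<close>)
    also have "\<dots> = (\<Sum>j\<in>T s. \<Sum>i\<in>{i\<in>I. i s = j}. \<Sum>a<r (s-1). \<Sum>b<r s. X j a b * (c i * Lv i a * Rv i b))"
      by (intro sum.cong refl) (auto simp: AX_def sum_distrib_left mult_ac)
    also have "\<dots> = (\<Sum>j\<in>T s. \<Sum>a<r (s-1). \<Sum>b<r s. \<Sum>i\<in>{i\<in>I. i s = j}. X j a b * (c i * Lv i a * Rv i b))"
      by (rule sum.cong[OF refl], rule swap3)
    also have "\<dots> = (\<Sum>j\<in>T s. \<Sum>a<r (s-1). \<Sum>b<r s. TT c j a b * X j a b)"
      by (simp add: TT_def sum_distrib_left mult_ac)
    finally show "(\<Sum>i\<in>I. c i * AX X i) = (\<Sum>j\<in>T s. \<Sum>a<r (s-1). \<Sum>b<r s. TT c j a b * X j a b)" .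
  qed

  have inv: "\<And>X j a b. j \<in> T s \<Longrightarrow> a < r (s-1) \<Longrightarrow> b < r s \<Longrightarrow> TT (AX X) j a b = X j a b"
  proof -
    fix X j a b assume j: "j \<in> T s" and a: "a < r (s-1)" and b: "b < r s"
    have "TT (AX X) j a b = (\<Sum>i\<in>{i\<in>I. i s = j}. \<Sum>a'<r (s-1). \<Sum>b'<r s.
        X j a' b' * ((Lv i a * Lv i a') * (Rv i b * Rv i b')))"
      unfolding TT_def AX_def
      by (intro sum.cong refl) (auto simp: sum_distrib_right sum_distrib_left mult_ac)
    also have "\<dots> = (\<Sum>a'<r (s-1). \<Sum>b'<r s. \<Sum>i\<in>{i\<in>I. i s = j}.
        X j a' b' * ((Lv i a * Lv i a') * (Rv i b * Rv i b')))"
      by (rule swap3)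
    also have "\<dots> = (\<Sum>a'<r (s-1). \<Sum>b'<r s. X j a' b' * ((if a = a' then 1 else 0) * (if b = b' then 1 else 0)))"
      by (intro sum.cong refl) (simp add: sum_distrib_left[symmetric] orth[OF j a _ b])
    also have "\<dots> = X j a b" by (rule delta2[OF a b])
    finally show "TT (AX X) j a b = X j a b" .
  qed

  have ttm: "\<And>i. i \<in> I \<Longrightarrow> tt_tensor d Gm i = (\<Sum>a'<r (s-1). \<Sum>b'<r s. Lm i a' * Gm s (i s) $$ (a',b') * Rm i b')"
    unfolding Lm_def Rm_def
  proof (rule tt_expand[where r=r and d=d and s=s, OF r0 rd s1 sd])
    fix i assume i: "i \<in> I"
    show "\<forall>mu\<in>{1..d}. Gm mu (i mu) \<in> carrier_mat (r (mu - 1)) (r mu)"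
      using dimsGm Imem[OF i] by blast
  qed
  have ttH: "\<And>(H::nat \<Rightarrow> real mat) i. \<forall>j\<in>T s. H j \<in> carrier_mat (r (s-1)) (r s) \<Longrightarrow> i \<in> I \<Longrightarrow>
      tt_tensor d (G(s:=H)) i = AX (\<lambda>j a b. H j $$ (a,b)) i"
  proof -
    fix H :: "nat \<Rightarrow> real mat" and i assume H: "\<forall>j\<in>T s. H j \<in> carrier_mat (r (s-1)) (r s)" and i: "i \<in> I"
    have dF: "\<forall>mu\<in>{1..d}. (G(s:=H)) mu (i mu) \<in> carrier_mat (r (mu - 1)) (r mu)"
    proof
      fix mu assume mu: "mu \<in> {1..d}"
      show "(G(s:=H)) mu (i mu) \<in> carrier_mat (r (mu - 1)) (r mu)"
      proof (cases "mu = s")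
        case True then show ?thesis using H IsT[OF i] by simp
      next
        case False then show ?thesis using dimsG Imem[OF i mu] mu by simp
      qed
    qed
    have l: "left_prod (G(s:=H)) i (s-1) = left_prod G i (s-1)"
      by (rule left_prod_cong) (use s1 in auto)
    have r: "right_prod (G(s:=H)) d i s = right_prod G d i s"
      by (rule right_prod_cong) (use sd in auto)
    show "tt_tensor d (G(s:=H)) i = AX (\<lambda>j a b. H j $$ (a,b)) i"
      unfolding tt_expand[where r=r and F="G(s:=H)" and i=i and d=d and s=s, OF r0 rd s1 sd dF] AX_def Lv_def Rv_def l r by simp
  qed
  have Za: "\<And>i. Z\<alpha> i = tt_tensor d Gm i + (if i \<in> P then \<alpha> * (M i - tt_tensor d Gm i) else 0)"
  proof -
    fix i
    have "Z\<alpha> i = \<alpha> * Z i + (1 - \<alpha>) * tt_tensor d Gm i" using Z\<alpha>_def by blast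
    moreover have "Z i = (if i \<in> P then M i else tt_tensor d Gm i)" using Z_def by blast
    ultimately show "Z\<alpha> i = tt_tensor d Gm i + (if i \<in> P then \<alpha> * (M i - tt_tensor d Gm i) else 0)"
      by (cases "i \<in> P") (simp_all add: algebra_simps)
  qed

  have gnew: "\<And>j a b. j \<in> T s \<Longrightarrow> a < r (s-1) \<Longrightarrow> b < r s \<Longrightarrow> TT Z\<alpha> j a b = Gc j a b"
  proof -
    fix j a b assume j: "j \<in> T s" and a: "a < r (s-1)" and b: "b < r s"
    define LG where "LG = left_gram r n G Gm s"
    define RG where "RG = right_gram d n r Gm G s"
    define MS where "MS = msum (r (s - 1)) (r s)
            (\<lambda>i. (\<alpha> * (M i - tt_tensor d Gm i)) \<cdot>\<^sub>m
                 ((left_prod G i (s - 1))\<^sup>T * (right_prod G d i s)\<^sup>T))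
            {i \<in> P. i s = j}"
    have cGmj: "Gm s j \<in> carrier_mat (r (s-1)) (r s)" using dimsGm j s unfolding T_def by blast
    have cLGr: "LG \<in> carrier_mat (r (s-1)) (r (s-1))" unfolding LG_def left_gram_def msum_def by simp
    have cRGr: "RG \<in> carrier_mat (r s) (r s)" unfolding RG_def right_gram_def msum_def by simp
    have cMS: "MS \<in> carrier_mat (r (s-1)) (r s)" unfolding MS_def msum_def by simp
    have LGe: "\<And>a a'. a < r (s-1) \<Longrightarrow> a' < r (s-1) \<Longrightarrow>
        LG $$ (a,a') = (\<Sum>l\<in>PiE {1..s-1} T. Lv l a * Lm l a')"
    proof -
      fix a a' assume a: "a < r (s-1)" and a': "a' < r (s-1)"
      have "LG $$ (a,a') = (\<Sum>l\<in>PiE {1..s-1} T. ((left_prod G l (s-1))\<^sup>T * left_prod Gm l (s-1)) $$ (a,a'))"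
        unfolding LG_def left_gram_def T_def using a a' by (simp add: msum_entry)
      also have "\<dots> = (\<Sum>l\<in>PiE {1..s-1} T. Lv l a * Lm l a')"
      proof (intro sum.cong refl)
        fix l assume l: "l \<in> PiE {1..s-1} T"
        have ll: "\<forall>mu\<in>{1..s-1}. l mu \<in> {1..n mu}" using l unfolding T_def by (auto simp: PiE_iff)
        have c1: "left_prod G l (s-1) \<in> carrier_mat 1 (r (s-1))" by (rule lp_carrier[OF G _ ll]) (use sd in simp)
        have c2: "left_prod Gm l (s-1) \<in> carrier_mat 1 (r (s-1))" by (rule lp_carrier[OF Gm _ ll]) (use sd in simp)
        have c1T: "(left_prod G l (s-1))\<^sup>T \<in> carrier_mat (r (s-1)) 1" using c1 by auto
        show "((left_prod G l (s-1))\<^sup>T * left_prod Gm l (s-1)) $$ (a,a') = Lv l a * Lm l a'"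
          using mult_entry[OF c1T c2 a a'] c1 a unfolding Lv_def Lm_def by simp
      qed
      finally show "LG $$ (a,a') = (\<Sum>l\<in>PiE {1..s-1} T. Lv l a * Lm l a')" .
    qed
    have RGe: "\<And>b' b. b' < r s \<Longrightarrow> b < r s \<Longrightarrow>
        RG $$ (b',b) = (\<Sum>u\<in>PiE {Suc s..d} T. Rm u b' * Rv u b)"
    proof -
      fix b' b assume b': "b' < r s" and b: "b < r s"
      have "RG $$ (b',b) = (\<Sum>u\<in>PiE {Suc s..d} T. (right_prod Gm d u s * (right_prod G d u s)\<^sup>T) $$ (b',b))"
        unfolding RG_def right_gram_def T_def using b b' by (simp add: msum_entry)
      also have "\<dots> = (\<Sum>u\<in>PiE {Suc s..d} T. Rm u b' * Rv u b)"
      proof (intro sum.cong refl)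
        fix u assume u: "u \<in> PiE {Suc s..d} T"
        have uu: "\<forall>mu\<in>{Suc s..d}. u mu \<in> {1..n mu}" using u unfolding T_def by (auto simp: PiE_iff)
        have c1: "right_prod G d u s \<in> carrier_mat (r s) 1" by (rule rp_carrier[OF G sd uu])
        have c2: "right_prod Gm d u s \<in> carrier_mat (r s) 1" by (rule rp_carrier[OF Gm sd uu])
        have c1T: "(right_prod G d u s)\<^sup>T \<in> carrier_mat 1 (r s)" using c1 by auto
        show "(right_prod Gm d u s * (right_prod G d u s)\<^sup>T) $$ (b',b) = Rm u b' * Rv u b"
          using mult_entry[OF c2 c1T b' b] c1 b unfolding Rv_def Rm_def by simp
      qed
      finally show "RG $$ (b',b) = (\<Sum>u\<in>PiE {Suc s..d} T. Rm u b' * Rv u b)" .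
    qed
    have part1: "TT (tt_tensor d Gm) j a b = (LG * Gm s j * RG) $$ (a,b)"
    proof -
      have "TT (tt_tensor d Gm) j a b = (\<Sum>i\<in>{i\<in>I. i s = j}. \<Sum>a'<r (s-1). \<Sum>b'<r s.
           Gm s j $$ (a',b') * ((Lv i a * Lm i a') * (Rm i b' * Rv i b)))"
        unfolding TT_def
        by (intro sum.cong refl) (auto simp: ttm sum_distrib_right sum_distrib_left mult_ac)
      also have "\<dots> = (\<Sum>a'<r (s-1). \<Sum>b'<r s. \<Sum>i\<in>{i\<in>I. i s = j}.
           Gm s j $$ (a',b') * ((Lv i a * Lm i a') * (Rm i b' * Rv i b)))"
        by (rule swap3)
      also have "\<dots> = (\<Sum>a'<r (s-1). \<Sum>b'<r s. Gm s j $$ (a',b') *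
           ((\<Sum>l\<in>PiE {1..s-1} T. Lv l a * Lm l a') * (\<Sum>u\<in>PiE {Suc s..d} T. Rm u b' * Rv u b)))"
      proof (intro sum.cong refl)
        fix a' b'
        have "(\<Sum>i\<in>{i\<in>I. i s = j}. (Lv i a * Lm i a') * (Rm i b' * Rv i b))
          = (\<Sum>l\<in>PiE {1..s-1} T. Lv l a * Lm l a') * (\<Sum>u\<in>PiE {Suc s..d} T. Rm u b' * Rv u b)"
          unfolding I_def T_def
        proof (rule split_sum[OF s1 sd])
          show "j \<in> {1..n s}" using j unfolding T_def by simp
          show "\<And>i i'. \<forall>mu\<in>{1..s-1}. i mu = i' mu \<Longrightarrow> Lv i a * Lm i a' = Lv i' a * Lm i' a'"
            unfolding Lv_def Lm_def using pdep by metis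
          show "\<And>i i'. \<forall>mu\<in>{Suc s..d}. i mu = i' mu \<Longrightarrow> Rm i b' * Rv i b = Rm i' b' * Rv i' b"
            unfolding Rv_def Rm_def using qdep by metis
        qed
        then show "(\<Sum>i\<in>{i\<in>I. i s = j}. Gm s j $$ (a',b') * ((Lv i a * Lm i a') * (Rm i b' * Rv i b)))
          = Gm s j $$ (a',b') * ((\<Sum>l\<in>PiE {1..s-1} T. Lv l a * Lm l a') * (\<Sum>u\<in>PiE {Suc s..d} T. Rm u b' * Rv u b))"
          by (simp add: sum_distrib_left[symmetric])
      qed
      also have "\<dots> = (\<Sum>a'<r (s-1). \<Sum>b'<r s. LG $$ (a,a') * Gm s j $$ (a',b') * RG $$ (b',b))"
        by (intro sum.cong refl) (simp add: LGe[OF a] RGe[OF _ b])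
      also have "\<dots> = (\<Sum>b'<r s. \<Sum>a'<r (s-1). LG $$ (a,a') * Gm s j $$ (a',b') * RG $$ (b',b))"
        by (rule sum.swap)
      also have "\<dots> = (\<Sum>b'<r s. (LG * Gm s j) $$ (a,b') * RG $$ (b',b))"
        by (intro sum.cong refl) (simp add: mult_entry[OF cLGr cGmj a] sum_distrib_right)
      also have "\<dots> = (LG * Gm s j * RG) $$ (a,b)"
        using mult_entry[OF mult_carrier_mat[OF cLGr cGmj] cRGr a b] by simp
      finally show ?thesis .
    qed
    have part2: "TT (\<lambda>i. if i \<in> P then \<alpha> * (M i - tt_tensor d Gm i) else 0) j a b = MS $$ (a,b)"
    proof -
      have "TT (\<lambda>i. if i \<in> P then \<alpha> * (M i - tt_tensor d Gm i) else 0) j a b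
         = (\<Sum>i\<in>{i\<in>I. i s = j}. if i \<in> P then \<alpha> * (M i - tt_tensor d Gm i) * Lv i a * Rv i b else 0)"
        unfolding TT_def by (intro sum.cong refl) auto
      also have "\<dots> = (\<Sum>i\<in>{x\<in>{i\<in>I. i s = j}. x \<in> P}. \<alpha> * (M i - tt_tensor d Gm i) * Lv i a * Rv i b)"
        by (rule sum.inter_filter[symmetric]) (use finI in auto)
      also have "{x\<in>{i\<in>I. i s = j}. x \<in> P} = {i\<in>P. i s = j}" using P unfolding I_def by auto
      also have "(\<Sum>i\<in>{i\<in>P. i s = j}. \<alpha> * (M i - tt_tensor d Gm i) * Lv i a * Rv i b) = MS $$ (a,b)"
        unfolding MS_def
      proof (subst msum_entry[OF a b], intro sum.cong refl)
        fix i assume "i \<in> {i\<in>P. i s = j}"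
        then have i: "i \<in> I" using P unfolding I_def by auto
        have c1T: "(left_prod G i (s-1))\<^sup>T \<in> carrier_mat (r (s-1)) 1" using cLG[OF i] by auto
        have c2T: "(right_prod G d i s)\<^sup>T \<in> carrier_mat 1 (r s)" using cRG[OF i] by auto
        show "\<alpha> * (M i - tt_tensor d Gm i) * Lv i a * Rv i b =
          ((\<alpha> * (M i - tt_tensor d Gm i)) \<cdot>\<^sub>m ((left_prod G i (s - 1))\<^sup>T * (right_prod G d i s)\<^sup>T)) $$ (a, b)"
          using mult_entry[OF c1T c2T a b] c1T c2T a b cLG[OF i] cRG[OF i] unfolding Lv_def Rv_def by simp
      qed
      finally show ?thesis .
    qed
    have "TT Z\<alpha> j a b = TT (tt_tensor d Gm) j a b + TT (\<lambda>i. if i \<in> P then \<alpha> * (M i - tt_tensor d Gm i) else 0) j a b"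
      unfolding TT_def Za by (simp add: sum.distrib[symmetric] algebra_simps)
    also have "\<dots> = (LG * Gm s j * RG + MS) $$ (a,b)"
      using part1 part2 cMS a b mult_carrier_mat[OF mult_carrier_mat[OF cLGr cGmj] cRGr] by simp
    also have "\<dots> = Gc j a b" unfolding Gc_def LG_def RG_def MS_def using Gnew_def by simp
    finally show "TT Z\<alpha> j a b = Gc j a b" .
  qed

  have cGnew: "\<forall>j\<in>T s. Gnew j \<in> carrier_mat (r (s-1)) (r s)"
  proof
    fix j assume j: "j \<in> T s"
    have cGmj: "Gm s j \<in> carrier_mat (r (s-1)) (r s)" using dimsGm j s unfolding T_def by blast
    have cLGr: "left_gram r n G Gm s \<in> carrier_mat (r (s-1)) (r (s-1))" unfolding left_gram_def msum_def by simp
    have cRGr: "right_gram d n r Gm G s \<in> carrier_mat (r s) (r s)" unfolding right_gram_def msum_def by simp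
    have cMS: "msum (r (s - 1)) (r s)
            (\<lambda>i. (\<alpha> * (M i - tt_tensor d Gm i)) \<cdot>\<^sub>m
                 ((left_prod G i (s - 1))\<^sup>T * (right_prod G d i s)\<^sup>T))
            {i \<in> P. i s = j} \<in> carrier_mat (r (s-1)) (r s)" unfolding msum_def by simp
    show "Gnew j \<in> carrier_mat (r (s-1)) (r s)"
      unfolding Gnew_def[rule_format] using cGmj cLGr cRGr cMS by auto
  qed
  have Pyth: "\<And>H :: nat \<Rightarrow> real mat. \<forall>j\<in>T s. H j \<in> carrier_mat (r (s-1)) (r s) \<Longrightarrow>
     (\<Sum>i\<in>I. (Z\<alpha> i - tt_tensor d (G(s:=H)) i)\<^sup>2)
     = (\<Sum>i\<in>I. (Z\<alpha> i - tt_tensor d (G(s:=Gnew)) i)\<^sup>2)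
       + (\<Sum>j\<in>T s. \<Sum>a<r (s-1). \<Sum>b<r s. (H j $$ (a,b) - Gnew j $$ (a,b))\<^sup>2)"
  proof -
    fix H :: "nat \<Rightarrow> real mat" assume H: "\<forall>j\<in>T s. H j \<in> carrier_mat (r (s-1)) (r s)"
    define Hc where "Hc = (\<lambda>j a b. H j $$ (a,b))"
    define Dc where "Dc = (\<lambda>j a b. Hc j a b - Gc j a b)"
    define E where "E = (\<lambda>i. Z\<alpha> i - AX Gc i)"
    have lin: "\<And>i. AX Dc i = AX Hc i - AX Gc i"
      unfolding AX_def Dc_def by (simp add: sum_subtractf[symmetric] algebra_simps)
    have e1: "(\<Sum>i\<in>I. (Z\<alpha> i - tt_tensor d (G(s:=H)) i)\<^sup>2) = (\<Sum>i\<in>I. (E i - AX Dc i)\<^sup>2)"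
      by (intro sum.cong refl) (simp add: ttH[OF H] E_def Hc_def lin)
    have e2: "(\<Sum>i\<in>I. (Z\<alpha> i - tt_tensor d (G(s:=Gnew)) i)\<^sup>2) = (\<Sum>i\<in>I. (E i)\<^sup>2)"
      by (intro sum.cong refl) (simp add: ttH[OF cGnew] E_def Gc_def)
    have e3: "(\<Sum>i\<in>I. (E i - AX Dc i)\<^sup>2)
       = (\<Sum>i\<in>I. (E i)\<^sup>2) - 2 * (\<Sum>i\<in>I. E i * AX Dc i) + (\<Sum>i\<in>I. AX Dc i * AX Dc i)"
    proof -
      have pt: "\<And>i. (E i - AX Dc i)\<^sup>2 = (E i)\<^sup>2 - 2 * (E i * AX Dc i) + AX Dc i * AX Dc i"
        by (simp add: power2_eq_square algebra_simps)
      show ?thesis unfolding pt by (simp add: sum.distrib sum_subtractf sum_distrib_left)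
    qed
    have z: "(\<Sum>i\<in>I. E i * AX Dc i) = 0"
    proof -
      have "(\<Sum>i\<in>I. E i * AX Dc i) = (\<Sum>j\<in>T s. \<Sum>a<r (s-1). \<Sum>b<r s. TT E j a b * Dc j a b)"
        by (rule adj)
      also have "\<dots> = 0"
      proof (intro sum.neutral ballI)
        fix j a b assume j: "j \<in> T s" and a: "a \<in> {..<r (s-1)}" and b: "b \<in> {..<r s}"
        have "TT E j a b = TT Z\<alpha> j a b - TT (AX Gc) j a b"
          unfolding TT_def E_def by (simp add: sum_subtractf[symmetric] algebra_simps)
        also have "\<dots> = 0" using gnew[OF j] inv[OF j] a b by simp
        finally show "TT E j a b * Dc j a b = 0" by simp
      qed
      finally show ?thesis .
    qed
    have q: "(\<Sum>i\<in>I. AX Dc i * AX Dc i) = (\<Sum>j\<in>T s. \<Sum>a<r (s-1). \<Sum>b<r s. (Dc j a b)\<^sup>2)"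
    proof -
      have "(\<Sum>i\<in>I. AX Dc i * AX Dc i) = (\<Sum>j\<in>T s. \<Sum>a<r (s-1). \<Sum>b<r s. TT (AX Dc) j a b * Dc j a b)"
        by (rule adj)
      also have "\<dots> = (\<Sum>j\<in>T s. \<Sum>a<r (s-1). \<Sum>b<r s. (Dc j a b)\<^sup>2)"
        by (intro sum.cong refl) (simp add: inv power2_eq_square)
      finally show ?thesis .
    qed
    show "(\<Sum>i\<in>I. (Z\<alpha> i - tt_tensor d (G(s:=H)) i)\<^sup>2)
     = (\<Sum>i\<in>I. (Z\<alpha> i - tt_tensor d (G(s:=Gnew)) i)\<^sup>2)
       + (\<Sum>j\<in>T s. \<Sum>a<r (s-1). \<Sum>b<r s. (H j $$ (a,b) - Gnew j $$ (a,b))\<^sup>2)"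
      unfolding e1 e2 e3 z q by (simp add: Dc_def Hc_def Gc_def)
  qed

  show ?thesis
  proof (intro conjI allI impI)
    show "\<forall>j\<in>{1..n s}. Gnew j \<in> carrier_mat (r (s - 1)) (r s)" using cGnew unfolding T_def .
  next
    fix H :: "nat \<Rightarrow> real mat"
    assume H0: "\<forall>j\<in>{1..n s}. H j \<in> carrier_mat (r (s - 1)) (r s)"
    then have H: "\<forall>j\<in>T s. H j \<in> carrier_mat (r (s - 1)) (r s)" unfolding T_def .
    define SH where "SH = (\<Sum>i\<in>I. (Z\<alpha> i - tt_tensor d (G(s:=H)) i)\<^sup>2)"
    define SG where "SG = (\<Sum>i\<in>I. (Z\<alpha> i - tt_tensor d (G(s:=Gnew)) i)\<^sup>2)"
    define SD where "SD = (\<Sum>j\<in>T s. \<Sum>a<r (s-1). \<Sum>b<r s. (H j $$ (a,b) - Gnew j $$ (a,b))\<^sup>2)"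
    have eq: "SH = SG + SD" unfolding SH_def SG_def SD_def by (rule Pyth[OF H])
    have SD0: "SD \<ge> 0" unfolding SD_def by (intro sum_nonneg) auto
    have fnH: "frob_norm d n (\<lambda>i. Z\<alpha> i - tt_tensor d (G(s := H)) i) = sqrt SH"
      unfolding frob_norm_def SH_def I_def ..
    have fnG: "frob_norm d n (\<lambda>i. Z\<alpha> i - tt_tensor d (G(s := Gnew)) i) = sqrt SG"
      unfolding frob_norm_def SG_def I_def ..
    show "frob_norm d n (\<lambda>i. Z\<alpha> i - tt_tensor d (G(s := Gnew)) i)
        \<le> frob_norm d n (\<lambda>i. Z\<alpha> i - tt_tensor d (G(s := H)) i)"
      unfolding fnH fnG eq using SD0 by simp
    assume "frob_norm d n (\<lambda>i. Z\<alpha> i - tt_tensor d (G(s := H)) i)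
          = frob_norm d n (\<lambda>i. Z\<alpha> i - tt_tensor d (G(s := Gnew)) i)"
    then have "sqrt SH = sqrt SG" unfolding fnH fnG .
    then have "SD = 0" unfolding eq by simp
    then have zero: "\<forall>j\<in>T s. \<forall>a\<in>{..<r (s-1)}. \<forall>b\<in>{..<r s}. (H j $$ (a,b) - Gnew j $$ (a,b))\<^sup>2 = 0"
    proof (intro ballI)
      fix j a b assume j: "j \<in> T s" and a: "a \<in> {..<r (s-1)}" and b: "b \<in> {..<r s}"
      have fT: "finite (T s)" unfolding T_def by simp
      have "\<forall>j\<in>T s. (\<Sum>a<r (s-1). \<Sum>b<r s. (H j $$ (a,b) - Gnew j $$ (a,b))\<^sup>2) = 0"
        using \<open>SD = 0\<close> unfolding SD_def
        by (subst (asm) sum_nonneg_eq_0_iff[OF fT]) (auto intro!: sum_nonneg)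
      then have "(\<Sum>a<r (s-1). \<Sum>b<r s. (H j $$ (a,b) - Gnew j $$ (a,b))\<^sup>2) = 0" using j by blast
      then have "\<forall>a\<in>{..<r (s-1)}. (\<Sum>b<r s. (H j $$ (a,b) - Gnew j $$ (a,b))\<^sup>2) = 0"
        by (subst (asm) sum_nonneg_eq_0_iff) (auto intro!: sum_nonneg)
      then have "(\<Sum>b<r s. (H j $$ (a,b) - Gnew j $$ (a,b))\<^sup>2) = 0" using a by blast
      then have "\<forall>b\<in>{..<r s}. (H j $$ (a,b) - Gnew j $$ (a,b))\<^sup>2 = 0"
        by (subst (asm) sum_nonneg_eq_0_iff) auto
      then show "(H j $$ (a,b) - Gnew j $$ (a,b))\<^sup>2 = 0" using b by blast
    qed
    show "\<forall>j\<in>{1..n s}. H j = Gnew j"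
    proof
      fix j assume j: "j \<in> {1..n s}"
      then have jT: "j \<in> T s" unfolding T_def .
      show "H j = Gnew j"
      proof (rule eq_matI)
        have c1: "H j \<in> carrier_mat (r (s-1)) (r s)" using H jT by blast
        have c2: "Gnew j \<in> carrier_mat (r (s-1)) (r s)" using cGnew jT by blast
        show "dim_row (H j) = dim_row (Gnew j)" "dim_col (H j) = dim_col (Gnew j)"
          using c1 c2 by auto
        fix a b assume "a < dim_row (Gnew j)" "b < dim_col (Gnew j)"
        moreover have "Gnew j \<in> carrier_mat (r (s-1)) (r s)" using cGnew jT by blast
        ultimately have "a < r (s-1)" "b < r s" by auto
        then show "H j $$ (a,b) = Gnew j $$ (a,b)" using zero jT by auto
      qed
    qed
  qed
qed

end
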